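(* Consider a network flow market on a directed series-parallel network with source $s$ and sink $t$, where each edge $e$ (a good) has capacity $c_e>0$ and delay cost $d_e\ge0$ per unit of flow. Each agent $i\in A$ must send $r_i\ge0$ units of flow from $s$ to $t$ (its covering constraints are flow conservation at all nodes other than $s,t$, net outflow $r_i$ at $s$, and nonnegativity), and the allocation must satisfy $\sum_if_{ie}\le c_e$ for every edge. Assume the maximum $s$–$t$ flow value is at least $\sum_{i\in A}r_i$. Then this market satisfies extensibility.
   Context: An allocation $(f_{ie})$ is supply respecting if $\sum_if_{ie}\le c_e$ for every edge $e$. The delay of agent $i$ is $\sum_ed_ef_{ie}$. For a set of agents $S$, an allocation is jointly optimal for $S$ if every $i\in S$ sends an $s$–$t$ flow of value $r_i$, it is supply respecting, and it minimizes $\sum_{i\in S}\sum_ed_ef_{ie}$ among such allocations. A market satisfies extensibility if for every $S\subset A$, every allocation jointly optimal for $S$ and every $i\in A\setminus S$, there is an allocation jointly optimal for $S\cup\{i\}$ in which each agent of $S$ has the same delay as before. A series-parallel network (between $s$ and $t$) is one obtained from single edges by repeated series and parallel composition. *)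

theory Defs
  imports Complex_Main
begin

text \<open>Directed multigraph: edges of type 'e, each edge e goes from src e to dst e.
  A network is given by a (finite) edge set E together with src and dst.\<close>

definition nodes :: "('e \<Rightarrow> 'v) \<Rightarrow> ('e \<Rightarrow> 'v) \<Rightarrow> 'e set \<Rightarrow> 'v set" where
  "nodes src dst E = src ` E \<union> dst ` E"

inductive series_parallel :: "('e \<Rightarrow> 'v) \<Rightarrow> ('e \<Rightarrow> 'v) \<Rightarrow> 'e set \<Rightarrow> 'v \<Rightarrow> 'v \<Rightarrow> bool"
  for src :: "'e \<Rightarrow> 'v" and dst :: "'e \<Rightarrow> 'v" where
  single: "src e \<noteq> dst e \<Longrightarrow> series_parallel src dst {e} (src e) (dst e)"
| series: "\<lbrakk> series_parallel src dst E1 s m; series_parallel src dst E2 m t;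
             E1 \<inter> E2 = {}; nodes src dst E1 \<inter> nodes src dst E2 = {m} \<rbrakk>
           \<Longrightarrow> series_parallel src dst (E1 \<union> E2) s t"
| parallel: "\<lbrakk> series_parallel src dst E1 s t; series_parallel src dst E2 s t;
             E1 \<inter> E2 = {}; nodes src dst E1 \<inter> nodes src dst E2 = {s, t} \<rbrakk>
           \<Longrightarrow> series_parallel src dst (E1 \<union> E2) s t"

definition outflow :: "('e \<Rightarrow> 'v) \<Rightarrow> 'e set \<Rightarrow> ('e \<Rightarrow> real) \<Rightarrow> 'v \<Rightarrow> real" where
  "outflow src E \<phi> u = (\<Sum>e\<in>{e\<in>E. src e = u}. \<phi> e)"

definition inflow :: "('e \<Rightarrow> 'v) \<Rightarrow> 'e set \<Rightarrow> ('e \<Rightarrow> real) \<Rightarrow> 'v \<Rightarrow> real" where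
  "inflow dst E \<phi> u = (\<Sum>e\<in>{e\<in>E. dst e = u}. \<phi> e)"

definition is_st_flow ::
  "('e \<Rightarrow> 'v) \<Rightarrow> ('e \<Rightarrow> 'v) \<Rightarrow> 'e set \<Rightarrow> 'v \<Rightarrow> 'v \<Rightarrow> ('e \<Rightarrow> real) \<Rightarrow> real \<Rightarrow> bool" where
  "is_st_flow src dst E s t \<phi> v \<longleftrightarrow>
     (\<forall>e\<in>E. 0 \<le> \<phi> e) \<and>
     (\<forall>u\<in>nodes src dst E. u \<noteq> s \<and> u \<noteq> t \<longrightarrow> inflow dst E \<phi> u = outflow src E \<phi> u) \<and>
     outflow src E \<phi> s - inflow dst E \<phi> s = v"

definition max_flow_value ::
  "('e \<Rightarrow> 'v) \<Rightarrow> ('e \<Rightarrow> 'v) \<Rightarrow> 'e set \<Rightarrow> 'v \<Rightarrow> 'v \<Rightarrow> ('e \<Rightarrow> real) \<Rightarrow> real" where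
  "max_flow_value src dst E s t c =
     Sup {v. \<exists>\<phi>. is_st_flow src dst E s t \<phi> v \<and> (\<forall>e\<in>E. \<phi> e \<le> c e)}"

text \<open>Allocation f: agent i sends f i e on edge e.\<close>
definition supply_respecting :: "'e set \<Rightarrow> ('e \<Rightarrow> real) \<Rightarrow> 'a set \<Rightarrow> ('a \<Rightarrow> 'e \<Rightarrow> real) \<Rightarrow> bool" where
  "supply_respecting E c S f \<longleftrightarrow> (\<forall>e\<in>E. (\<Sum>i\<in>S. f i e) \<le> c e)"

definition agent_delay :: "'e set \<Rightarrow> ('e \<Rightarrow> real) \<Rightarrow> ('e \<Rightarrow> real) \<Rightarrow> real" where
  "agent_delay E d \<phi> = (\<Sum>e\<in>E. d e * \<phi> e)"

definition feasible_for ::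
  "('e \<Rightarrow> 'v) \<Rightarrow> ('e \<Rightarrow> 'v) \<Rightarrow> 'e set \<Rightarrow> 'v \<Rightarrow> 'v \<Rightarrow> ('e \<Rightarrow> real) \<Rightarrow> ('a \<Rightarrow> real)
   \<Rightarrow> 'a set \<Rightarrow> ('a \<Rightarrow> 'e \<Rightarrow> real) \<Rightarrow> bool" where
  "feasible_for src dst E s t c r S f \<longleftrightarrow>
     (\<forall>i\<in>S. is_st_flow src dst E s t (f i) (r i)) \<and> supply_respecting E c S f"

definition jointly_optimal ::
  "('e \<Rightarrow> 'v) \<Rightarrow> ('e \<Rightarrow> 'v) \<Rightarrow> 'e set \<Rightarrow> 'v \<Rightarrow> 'v \<Rightarrow> ('e \<Rightarrow> real) \<Rightarrow> ('e \<Rightarrow> real)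
   \<Rightarrow> ('a \<Rightarrow> real) \<Rightarrow> 'a set \<Rightarrow> ('a \<Rightarrow> 'e \<Rightarrow> real) \<Rightarrow> bool" where
  "jointly_optimal src dst E s t c d r S f \<longleftrightarrow>
     feasible_for src dst E s t c r S f \<and>
     (\<forall>g. feasible_for src dst E s t c r S g \<longrightarrow>
          (\<Sum>i\<in>S. agent_delay E d (f i)) \<le> (\<Sum>i\<in>S. agent_delay E d (g i)))"

definition extensible ::
  "('e \<Rightarrow> 'v) \<Rightarrow> ('e \<Rightarrow> 'v) \<Rightarrow> 'e set \<Rightarrow> 'v \<Rightarrow> 'v \<Rightarrow> ('e \<Rightarrow> real) \<Rightarrow> ('e \<Rightarrow> real)
   \<Rightarrow> ('a \<Rightarrow> real) \<Rightarrow> 'a set \<Rightarrow> bool" where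
  "extensible src dst E s t c d r A \<longleftrightarrow>
     (\<forall>S f i. S \<subseteq> A \<and> jointly_optimal src dst E s t c d r S f \<and> i \<in> A - S \<longrightarrow>
        (\<exists>g. jointly_optimal src dst E s t c d r (insert i S) g \<and>
             (\<forall>j\<in>S. agent_delay E d (g j) = agent_delay E d (f j))))"

end

theory Submission
  imports Defs "HOL-Analysis.Analysis"
begin

definition feas :: "('e \<Rightarrow> 'v) \<Rightarrow> ('e \<Rightarrow> 'v) \<Rightarrow> 'e set \<Rightarrow> 'v \<Rightarrow> 'v \<Rightarrow> ('e \<Rightarrow> real) \<Rightarrow> ('e \<Rightarrow> real) \<Rightarrow> real \<Rightarrow> bool" where
  "feas src dst E s t c F v \<longleftrightarrow> is_st_flow src dst E s t F v \<and> (\<forall>e\<in>E. F e \<le> c e)"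

definition optf :: "('e \<Rightarrow> 'v) \<Rightarrow> ('e \<Rightarrow> 'v) \<Rightarrow> 'e set \<Rightarrow> 'v \<Rightarrow> 'v \<Rightarrow> ('e \<Rightarrow> real) \<Rightarrow> ('e \<Rightarrow> real) \<Rightarrow> ('e \<Rightarrow> real) \<Rightarrow> real \<Rightarrow> bool" where
  "optf src dst E s t c d F v \<longleftrightarrow> feas src dst E s t c F v \<and>
     (\<forall>G. feas src dst E s t c G v \<longrightarrow> agent_delay E d F \<le> agent_delay E d G)"

lemma sp_basic:
  assumes "series_parallel src dst E s t"
  shows "finite E \<and> s \<noteq> t \<and> s \<in> nodes src dst E \<and> t \<in> nodes src dst E"
  using assms
proof (induction rule: series_parallel.induct)
  case (single e)
  then show ?case by (auto simp: nodes_def)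
next
  case (series E1 s m E2 t)
  then show ?case by (auto simp: nodes_def)
next
  case (parallel E1 s t E2)
  then show ?case by (auto simp: nodes_def)
qed

lemma nodes_union: "nodes src dst (E1 \<union> E2) = nodes src dst E1 \<union> nodes src dst E2"
  by (auto simp: nodes_def)

lemma inflow_union:
  assumes "finite E1" "finite E2" "E1 \<inter> E2 = {}"
  shows "inflow dst (E1 \<union> E2) F u = inflow dst E1 F u + inflow dst E2 F u"
proof -
  have "{e\<in>E1 \<union> E2. dst e = u} = {e\<in>E1. dst e = u} \<union> {e\<in>E2. dst e = u}" by auto
  thus ?thesis unfolding inflow_def using assms by (simp add: sum.union_disjoint disjoint_iff)
qed

lemma outflow_union:
  assumes "finite E1" "finite E2" "E1 \<inter> E2 = {}"
  shows "outflow src (E1 \<union> E2) F u = outflow src E1 F u + outflow src E2 F u"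
proof -
  have "{e\<in>E1 \<union> E2. src e = u} = {e\<in>E1. src e = u} \<union> {e\<in>E2. src e = u}" by auto
  thus ?thesis unfolding outflow_def using assms by (simp add: sum.union_disjoint disjoint_iff)
qed

lemma delay_union:
  assumes "finite E1" "finite E2" "E1 \<inter> E2 = {}"
  shows "agent_delay (E1 \<union> E2) d F = agent_delay E1 d F + agent_delay E2 d F"
  unfolding agent_delay_def using assms by (simp add: sum.union_disjoint)

lemma flows_outside:
  assumes "u \<notin> nodes src dst E"
  shows "inflow dst E F u = 0" "outflow src E F u = 0"
  using assms unfolding inflow_def outflow_def by (auto simp: nodes_def intro!: sum.neutral)

lemma inflow_cong: "(\<forall>e\<in>E. F e = G e) \<Longrightarrow> inflow dst E F u = inflow dst E G u"
  unfolding inflow_def by (intro sum.cong) auto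
lemma outflow_cong: "(\<forall>e\<in>E. F e = G e) \<Longrightarrow> outflow src E F u = outflow src E G u"
  unfolding outflow_def by (intro sum.cong) auto
lemma delay_cong: "(\<forall>e\<in>E. F e = G e) \<Longrightarrow> agent_delay E d F = agent_delay E d G"
  unfolding agent_delay_def by (intro sum.cong) auto

lemma flow_cong:
  assumes "is_st_flow src dst E s t F v" "\<forall>e\<in>E. F e = G e"
  shows "is_st_flow src dst E s t G v"
  using assms inflow_cong[OF assms(2)] outflow_cong[OF assms(2)]
  unfolding is_st_flow_def by metis

lemma inflow_lin: "inflow dst E (\<lambda>e. a * F e + b * G e) u = a * inflow dst E F u + b * inflow dst E G u"
  unfolding inflow_def by (simp add: sum.distrib sum_distrib_left)
lemma outflow_lin: "outflow src E (\<lambda>e. a * F e + b * G e) u = a * outflow src E F u + b * outflow src E G u"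
  unfolding outflow_def by (simp add: sum.distrib sum_distrib_left)
lemma delay_lin: "agent_delay E d (\<lambda>e. a * F e + b * G e) = a * agent_delay E d F + b * agent_delay E d G"
  unfolding agent_delay_def by (simp add: sum.distrib sum_distrib_left algebra_simps)

lemma flow_lin:
  assumes "is_st_flow src dst E s t F v" "is_st_flow src dst E s t G w"
    "\<forall>e\<in>E. 0 \<le> a * F e + b * G e"
  shows "is_st_flow src dst E s t (\<lambda>e. a * F e + b * G e) (a * v + b * w)"
  using assms unfolding is_st_flow_def inflow_lin outflow_lin
  by (auto simp: algebra_simps)

lemma sum_outflow:
  assumes "finite E" "finite N" "src ` E \<subseteq> N"
  shows "(\<Sum>u\<in>N. outflow src E F u) = sum F E"
proof -
  have "(\<Sum>u\<in>N. outflow src E F u) = (\<Sum>u\<in>N. \<Sum>e\<in>E. if src e = u then F e else 0)"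
    unfolding outflow_def using assms by (simp add: sum.inter_filter[symmetric])
  also have "\<dots> = (\<Sum>e\<in>E. \<Sum>u\<in>N. if src e = u then F e else 0)" by (rule sum.swap)
  also have "\<dots> = sum F E" using assms by (intro sum.cong) auto
  finally show ?thesis .
qed

lemma sum_inflow:
  assumes "finite E" "finite N" "dst ` E \<subseteq> N"
  shows "(\<Sum>u\<in>N. inflow dst E F u) = sum F E"
proof -
  have "(\<Sum>u\<in>N. inflow dst E F u) = (\<Sum>u\<in>N. \<Sum>e\<in>E. if dst e = u then F e else 0)"
    unfolding inflow_def using assms by (simp add: sum.inter_filter[symmetric])
  also have "\<dots> = (\<Sum>e\<in>E. \<Sum>u\<in>N. if dst e = u then F e else 0)" by (rule sum.swap)
  also have "\<dots> = sum F E" using assms by (intro sum.cong) auto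
  finally show ?thesis .
qed

lemma sink_value:
  assumes "finite E" "s \<noteq> t" "is_st_flow src dst E s t F v"
  shows "inflow dst E F t - outflow src E F t = v"
proof -
  define N where "N = nodes src dst E \<union> {s, t}"
  have finN: "finite N" using assms(1) by (simp add: N_def nodes_def)
  have "src ` E \<subseteq> N" "dst ` E \<subseteq> N" by (auto simp: N_def nodes_def)
  hence "(\<Sum>u\<in>N. outflow src E F u - inflow dst E F u) = 0"
    using sum_outflow[OF assms(1) finN, of src F] sum_inflow[OF assms(1) finN, of dst F]
    by (simp add: sum_subtractf)
  moreover have "(\<Sum>u\<in>N - {s,t}. outflow src E F u - inflow dst E F u) = 0"
    using assms(3) by (intro sum.neutral) (auto simp: N_def is_st_flow_def)
  moreover have "(\<Sum>u\<in>N. outflow src E F u - inflow dst E F u) =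
     (outflow src E F s - inflow dst E F s) + ((outflow src E F t - inflow dst E F t) +
     (\<Sum>u\<in>N - {s,t}. outflow src E F u - inflow dst E F u))"
  proof -
    have "N = insert s (insert t (N - {s, t}))" by (auto simp: N_def)
    hence "(\<Sum>u\<in>N. outflow src E F u - inflow dst E F u) = (\<Sum>u\<in>insert s (insert t (N - {s, t})). outflow src E F u - inflow dst E F u)" by simp
    also have "\<dots> = (outflow src E F s - inflow dst E F s) + ((outflow src E F t - inflow dst E F t) +
     (\<Sum>u\<in>N - {s,t}. outflow src E F u - inflow dst E F u))" using finN assms(2) by (simp add: sum.insert)
    finally show ?thesis .
  qed
  ultimately have "(outflow src E F s - inflow dst E F s) + (outflow src E F t - inflow dst E F t) = 0"
    by linarith
  thus ?thesis using assms(3) by (simp add: is_st_flow_def)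
qed

lemma par_split:
  assumes "finite E1" "finite E2" "E1 \<inter> E2 = {}" "nodes src dst E1 \<inter> nodes src dst E2 = {s, t}"
    "is_st_flow src dst (E1 \<union> E2) s t F v"
  shows "is_st_flow src dst E1 s t F (outflow src E1 F s - inflow dst E1 F s)"
proof -
  have cons: "inflow dst E1 F u = outflow src E1 F u"
    if "u \<in> nodes src dst E1" "u \<noteq> s" "u \<noteq> t" for u
  proof -
    have "u \<notin> nodes src dst E2" using that assms(4) by blast
    hence "inflow dst E2 F u = 0" "outflow src E2 F u = 0" by (simp_all add: flows_outside)
    moreover have "inflow dst (E1 \<union> E2) F u = outflow src (E1 \<union> E2) F u"
      using assms(5) that by (auto simp: is_st_flow_def nodes_union)
    ultimately show ?thesis by (simp add: inflow_union[OF assms(1-3)] outflow_union[OF assms(1-3)])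
  qed
  thus ?thesis using assms(5) by (auto simp: is_st_flow_def)
qed

lemma par_split2:
  assumes "finite E1" "finite E2" "E1 \<inter> E2 = {}" "nodes src dst E1 \<inter> nodes src dst E2 = {s, t}"
    "is_st_flow src dst (E1 \<union> E2) s t F v"
  shows "\<exists>v1. is_st_flow src dst E1 s t F v1 \<and> is_st_flow src dst E2 s t F (v - v1)"
proof -
  have a: "is_st_flow src dst E1 s t F (outflow src E1 F s - inflow dst E1 F s)"
    by (rule par_split[OF assms])
  have b: "is_st_flow src dst E2 s t F (outflow src E2 F s - inflow dst E2 F s)"
    by (rule par_split[of E2 E1]) (use assms in \<open>auto simp: Un_commute Int_commute\<close>)
  have "outflow src (E1 \<union> E2) F s - inflow dst (E1 \<union> E2) F s = v" using assms(5) by (simp add: is_st_flow_def)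
  hence "outflow src E2 F s - inflow dst E2 F s = v - (outflow src E1 F s - inflow dst E1 F s)"
    unfolding inflow_union[OF assms(1-3)] outflow_union[OF assms(1-3)] by linarith
  thus ?thesis using a b by metis
qed

lemma par_comb:
  assumes "finite E1" "finite E2" "E1 \<inter> E2 = {}" "nodes src dst E1 \<inter> nodes src dst E2 = {s, t}"
    "is_st_flow src dst E1 s t F v1" "is_st_flow src dst E2 s t F v2"
  shows "is_st_flow src dst (E1 \<union> E2) s t F (v1 + v2)"
proof -
  have "inflow dst (E1 \<union> E2) F u = outflow src (E1 \<union> E2) F u"
    if "u \<in> nodes src dst (E1 \<union> E2)" "u \<noteq> s" "u \<noteq> t" for u
  proof (cases "u \<in> nodes src dst E1")
    case True
    hence "u \<notin> nodes src dst E2" using that assms(4) by blast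
    thus ?thesis using True that assms(5) flows_outside[of u src dst E2]
      by (simp add: inflow_union[OF assms(1-3)] outflow_union[OF assms(1-3)] is_st_flow_def)
  next
    case False
    hence "u \<in> nodes src dst E2" using that by (simp add: nodes_union)
    thus ?thesis using False that assms(6) flows_outside[of u src dst E1]
      by (simp add: inflow_union[OF assms(1-3)] outflow_union[OF assms(1-3)] is_st_flow_def)
  qed
  thus ?thesis using assms(5,6)
    by (auto simp: inflow_union[OF assms(1-3)] outflow_union[OF assms(1-3)] is_st_flow_def)
qed

lemma ser_split:
  assumes "finite E1" "finite E2" "E1 \<inter> E2 = {}" "nodes src dst E1 \<inter> nodes src dst E2 = {m}"
    "s \<noteq> m" "m \<noteq> t" "s \<in> nodes src dst E1" "t \<in> nodes src dst E2"
    "is_st_flow src dst (E1 \<union> E2) s t F v"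
  shows "is_st_flow src dst E1 s m F v \<and> is_st_flow src dst E2 m t F v"
proof -
  note iu = inflow_union[OF assms(1-3)] and ou = outflow_union[OF assms(1-3)]
  have sE2: "s \<notin> nodes src dst E2" using assms(4,5,7) by auto
  have tE1: "t \<notin> nodes src dst E1" using assms(4,6,8) by auto
  have f1: "is_st_flow src dst E1 s m F v"
  proof -
    have "inflow dst E1 F u = outflow src E1 F u"
      if "u \<in> nodes src dst E1" "u \<noteq> s" "u \<noteq> m" for u
    proof -
      have "u \<notin> nodes src dst E2" using that assms(4) by blast
      moreover have "u \<noteq> t" using that tE1 by blast
      ultimately show ?thesis using that assms(9) flows_outside[of u src dst E2] 
        by (auto simp: iu ou is_st_flow_def nodes_union)
    qed
    thus ?thesis using assms(9) flows_outside[OF sE2] by (auto simp: iu ou is_st_flow_def)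
  qed
  have sv: "inflow dst E1 F m - outflow src E1 F m = v" by (rule sink_value[OF assms(1,5) f1])
  have mE: "m \<in> nodes src dst (E1 \<union> E2)" using assms(4) by (auto simp: nodes_union)
  have "m \<noteq> s" "m \<noteq> t" using assms(5,6) by auto
  hence cm: "inflow dst (E1 \<union> E2) F m = outflow src (E1 \<union> E2) F m"
    using assms(9) mE by (simp add: is_st_flow_def)
  have f2: "is_st_flow src dst E2 m t F v"
  proof -
    have "inflow dst E2 F u = outflow src E2 F u"
      if "u \<in> nodes src dst E2" "u \<noteq> m" "u \<noteq> t" for u
    proof -
      have "u \<notin> nodes src dst E1" using that assms(4) by blast
      moreover have "u \<noteq> s" using that sE2 by blast
      ultimately show ?thesis using that assms(9) flows_outside[of u src dst E1] 
        by (auto simp: iu ou is_st_flow_def nodes_union)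
    qed
    moreover have "outflow src E2 F m - inflow dst E2 F m = v" using cm sv by (simp add: iu ou)
    ultimately show ?thesis using assms(9) by (auto simp: is_st_flow_def)
  qed
  show ?thesis using f1 f2 by simp
qed

lemma ser_comb:
  assumes "finite E1" "finite E2" "E1 \<inter> E2 = {}" "nodes src dst E1 \<inter> nodes src dst E2 = {m}"
    "s \<noteq> m" "m \<noteq> t" "s \<in> nodes src dst E1" "t \<in> nodes src dst E2"
    "is_st_flow src dst E1 s m F v" "is_st_flow src dst E2 m t F v"
  shows "is_st_flow src dst (E1 \<union> E2) s t F v"
proof -
  note iu = inflow_union[OF assms(1-3)] and ou = outflow_union[OF assms(1-3)]
  have sE2: "s \<notin> nodes src dst E2" using assms(4,5,7) by auto
  have tE1: "t \<notin> nodes src dst E1" using assms(4,6,8) by auto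
  have sv: "inflow dst E1 F m - outflow src E1 F m = v" by (rule sink_value[OF assms(1,5,9)])
  have "inflow dst (E1 \<union> E2) F u = outflow src (E1 \<union> E2) F u"
    if "u \<in> nodes src dst (E1 \<union> E2)" "u \<noteq> s" "u \<noteq> t" for u
  proof (cases "u = m")
    case True
    thus ?thesis using sv assms(10) by (simp add: iu ou is_st_flow_def)
  next
    case False
    show ?thesis
    proof (cases "u \<in> nodes src dst E1")
      case True
      hence "u \<notin> nodes src dst E2" using False assms(4) by blast
      thus ?thesis using True False that assms(9) flows_outside[of u src dst E2] 
        by (simp add: iu ou is_st_flow_def)
    next
      case F1: False
      hence "u \<in> nodes src dst E2" using that by (simp add: nodes_union)
      thus ?thesis using F1 False that assms(10) flows_outside[of u src dst E1] 
        by (simp add: iu ou is_st_flow_def)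
    qed
  qed
  thus ?thesis using assms(9,10) flows_outside[OF sE2] by (auto simp: iu ou is_st_flow_def)
qed

lemma single_flow:
  assumes "src e \<noteq> dst e"
  shows "is_st_flow src dst {e} (src e) (dst e) F v \<longleftrightarrow> F e = v \<and> 0 \<le> F e"
proof -
  have "{x\<in>{e}. src x = src e} = {e}" by auto
  hence "outflow src {e} F (src e) = F e" unfolding outflow_def by (simp only:) simp
  moreover have "inflow dst {e} F (src e) = 0"
    unfolding inflow_def using assms by (auto intro!: sum.neutral)
  moreover have "nodes src dst {e} = {src e, dst e}" by (auto simp: nodes_def)
  ultimately show ?thesis unfolding is_st_flow_def by auto
qed


lemma cont_coord: "continuous_on UNIV (\<lambda>F::'e\<Rightarrow>real. F e)"
  by simp

lemma cont_inflow: "continuous_on UNIV (\<lambda>F. inflow dst E F u)"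
  unfolding inflow_def by (intro continuous_intros continuous_on_product_then_coordinatewise continuous_on_id)

lemma cont_outflow: "continuous_on UNIV (\<lambda>F. outflow src E F u)"
  unfolding outflow_def by (intro continuous_intros continuous_on_product_then_coordinatewise continuous_on_id)

lemma cont_delay: "continuous_on UNIV (\<lambda>F. agent_delay E d F)"
  unfolding agent_delay_def by (intro continuous_intros continuous_on_product_then_coordinatewise continuous_on_id)

lemma box_compact: "compact (PiE UNIV (\<lambda>e. if e\<in>E then {0..(c e::real)} else {0}))"
proof -
  have "compactin (product_topology (\<lambda>i. euclidean) UNIV) (PiE UNIV (\<lambda>e. if e\<in>E then {0..(c e::real)} else {0}))"
    by (subst compactin_PiE) (auto simp: compactin_euclidean_iff)
  thus ?thesis by (simp add: euclidean_product_topology compactin_euclidean_iff)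
qed

lemma closed_cons: "closed {F. \<forall>u\<in>nodes src dst E. u \<noteq> s \<and> u \<noteq> t \<longrightarrow> inflow dst E F u = outflow src E F u}"
proof -
  have "{F. \<forall>u\<in>nodes src dst E. u \<noteq> s \<and> u \<noteq> t \<longrightarrow> inflow dst E F u = outflow src E F u}
     = (\<Inter>u\<in>{u\<in>nodes src dst E. u \<noteq> s \<and> u \<noteq> t}. {F. inflow dst E F u = outflow src E F u})" by auto
  also have "closed \<dots>" by (intro closed_INT ballI closed_Collect_eq cont_inflow cont_outflow)
  finally show ?thesis .
qed

lemma closed_val: "closed {F. outflow src E F s - inflow dst E F s = v}"
  by (intro closed_Collect_eq continuous_intros cont_inflow cont_outflow)

lemma in_box: "F \<in> PiE UNIV (\<lambda>e. if e\<in>E then {0..(c e::real)} else {0}) \<longleftrightarrow>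
   (\<forall>e\<in>E. 0 \<le> F e \<and> F e \<le> c e) \<and> (\<forall>e. e \<notin> E \<longrightarrow> F e = 0)"
  by (auto simp: PiE_def Pi_def split: if_splits)

lemma exists_opt:
  assumes "finite E" "feas src dst E s t c G v"
  shows "\<exists>F. optf src dst E s t c d F v"
proof -
  define B where "B = PiE UNIV (\<lambda>e. if e\<in>E then {0..(c e::real)} else {0})"
  define C where "C = {F. \<forall>u\<in>nodes src dst E. u \<noteq> s \<and> u \<noteq> t \<longrightarrow> inflow dst E F u = outflow src E F u}
      \<inter> {F. outflow src E F s - inflow dst E F s = v}"
  have cB: "compact B" unfolding B_def by (rule box_compact)
  have cC: "closed C" unfolding C_def by (intro closed_Int closed_cons closed_val)
  have cK: "compact (B \<inter> C)" by (rule compact_Int_closed[OF cB cC])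
  have memK: "H \<in> B \<inter> C \<longleftrightarrow> feas src dst E s t c H v \<and> (\<forall>e. e \<notin> E \<longrightarrow> H e = 0)" for H
    unfolding B_def C_def Int_iff in_box mem_Collect_eq feas_def is_st_flow_def by blast
  define G' where "G' = (\<lambda>e. if e \<in> E then G e else 0)"
  have eqG: "\<forall>e\<in>E. G e = G' e" by (simp add: G'_def)
  have "is_st_flow src dst E s t G' v" by (rule flow_cong[OF _ eqG]) (use assms(2) in \<open>simp add: feas_def\<close>)
  hence feasG': "feas src dst E s t c G' v \<and> (\<forall>e. e \<notin> E \<longrightarrow> G' e = 0)"
    using assms(2) unfolding feas_def by (simp add: G'_def)
  hence "B \<inter> C \<noteq> {}" using memK by blast
  moreover have "continuous_on (B \<inter> C) (agent_delay E d)"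
    using cont_delay[of E d] by (rule continuous_on_subset) simp
  ultimately obtain F where F: "F \<in> B \<inter> C" "\<forall>H\<in>B \<inter> C. agent_delay E d F \<le> agent_delay E d H"
    using continuous_attains_inf[OF cK] by blast
  have "agent_delay E d F \<le> agent_delay E d H" if "feas src dst E s t c H v" for H
  proof -
    define H' where "H' = (\<lambda>e. if e \<in> E then H e else 0)"
    have eqH: "\<forall>e\<in>E. H e = H' e" by (simp add: H'_def)
    have "is_st_flow src dst E s t H' v" by (rule flow_cong[OF _ eqH]) (use that in \<open>simp add: feas_def\<close>)
    hence "feas src dst E s t c H' v \<and> (\<forall>e. e \<notin> E \<longrightarrow> H' e = 0)"
      using that unfolding feas_def by (simp add: H'_def)
    hence "H' \<in> B \<inter> C" using memK by blast
    hence "agent_delay E d F \<le> agent_delay E d H'" using F by blast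
    also have "\<dots> = agent_delay E d H" using delay_cong[OF eqH] by simp
    finally show ?thesis .
  qed
  thus ?thesis using F memK unfolding optf_def by blast
qed

lemma exists_maxflow:
  assumes "finite E" "\<forall>e\<in>E. 0 \<le> c e"
  shows "\<exists>F V. feas src dst E s t c F V \<and> (\<forall>G w. feas src dst E s t c G w \<longrightarrow> w \<le> V)"
proof -
  define B where "B = PiE UNIV (\<lambda>e. if e\<in>E then {0..(c e::real)} else {0})"
  define C where "C = {F. \<forall>u\<in>nodes src dst E. u \<noteq> s \<and> u \<noteq> t \<longrightarrow> inflow dst E F u = outflow src E F u}"
  have cB: "compact B" unfolding B_def by (rule box_compact)
  have cC: "closed C" unfolding C_def by (rule closed_cons)
  have cK: "compact (B \<inter> C)" by (rule compact_Int_closed[OF cB cC])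
  have memK: "H \<in> B \<inter> C \<longleftrightarrow> (\<forall>e\<in>E. 0 \<le> H e \<and> H e \<le> c e) \<and> (\<forall>e. e \<notin> E \<longrightarrow> H e = 0) \<and>
      (\<forall>u\<in>nodes src dst E. u \<noteq> s \<and> u \<noteq> t \<longrightarrow> inflow dst E H u = outflow src E H u)" for H
    unfolding B_def C_def Int_iff in_box mem_Collect_eq by blast
  have z1: "inflow dst E (\<lambda>e. 0) u = 0" "outflow src E (\<lambda>e. 0) u = 0" for u
    unfolding inflow_def outflow_def by simp_all
  have "(\<lambda>e. 0) \<in> B \<inter> C" unfolding memK using assms(2) z1 by simp
  hence ne: "B \<inter> C \<noteq> {}" by blast
  have "continuous_on (B \<inter> C) (\<lambda>F. outflow src E F s - inflow dst E F s)"
    by (rule continuous_on_subset[OF _ subset_UNIV]) (intro continuous_intros cont_inflow cont_outflow)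
  then obtain F where F: "F \<in> B \<inter> C"
    "\<forall>H\<in>B \<inter> C. outflow src E H s - inflow dst E H s \<le> outflow src E F s - inflow dst E F s"
    using continuous_attains_sup[OF cK ne] by blast
  have fF: "feas src dst E s t c F (outflow src E F s - inflow dst E F s)"
    using F(1) unfolding memK feas_def is_st_flow_def by blast
  have "w \<le> outflow src E F s - inflow dst E F s" if "feas src dst E s t c G w" for G w
  proof -
    define G' where "G' = (\<lambda>e. if e \<in> E then G e else 0)"
    have eqG: "\<forall>e\<in>E. G e = G' e" by (simp add: G'_def)
    have fl: "is_st_flow src dst E s t G' w" by (rule flow_cong[OF _ eqG]) (use that in \<open>simp add: feas_def\<close>)
    have "G' \<in> B \<inter> C" unfolding memK using that fl unfolding feas_def is_st_flow_def
      by (simp add: G'_def)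
    hence "outflow src E G' s - inflow dst E G' s \<le> outflow src E F s - inflow dst E F s" using F(2) by blast
    moreover have "outflow src E G' s - inflow dst E G' s = w" using fl by (simp add: is_st_flow_def)
    ultimately show ?thesis by simp
  qed
  thus ?thesis using fF by blast
qed

lemma opt_part:
  assumes "optf src dst E s t c d F v" "E = E1 \<union> E2" "E1 \<inter> E2 = {}" "finite E"
    "feas src dst E1 s1 t1 c F v1"
    "\<forall>K. feas src dst E1 s1 t1 c K v1 \<longrightarrow> feas src dst E s t c (\<lambda>e. if e \<in> E1 then K e else F e) v"
  shows "optf src dst E1 s1 t1 c d F v1"
proof -
  have fin: "finite E1" "finite E2" using assms(2,4) by auto
  have "agent_delay E1 d F \<le> agent_delay E1 d K" if "feas src dst E1 s1 t1 c K v1" for K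
  proof -
    define H where "H = (\<lambda>e. if e \<in> E1 then K e else F e)"
    have "feas src dst E s t c H v" using assms(6) that by (simp add: H_def)
    hence "agent_delay E d F \<le> agent_delay E d H" using assms(1) by (simp add: optf_def)
    moreover have "agent_delay E1 d H = agent_delay E1 d K" by (rule delay_cong) (simp add: H_def)
    moreover have "agent_delay E2 d H = agent_delay E2 d F" using assms(3) by (intro delay_cong) (auto simp: H_def)
    ultimately show ?thesis using assms(2) delay_union[OF fin assms(3)] by simp
  qed
  thus ?thesis using assms(5) by (simp add: optf_def)
qed

lemma feas_cong:
  assumes "feas src dst E s t c F v" "\<forall>e\<in>E. F e = H e"
  shows "feas src dst E s t c H v"
proof -
  have "is_st_flow src dst E s t F v" using assms(1) by (simp add: feas_def)
  hence "is_st_flow src dst E s t H v" by (rule flow_cong[OF _ assms(2)])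
  moreover have "\<forall>e\<in>E. H e \<le> c e" using assms unfolding feas_def by auto
  ultimately show ?thesis by (simp add: feas_def)
qed

lemma par_comb_feas:
  assumes "finite E1" "finite E2" "E1 \<inter> E2 = {}" "nodes src dst E1 \<inter> nodes src dst E2 = {s, t}"
    "feas src dst E1 s t c A v1" "feas src dst E2 s t c B v2" "\<forall>e\<in>E1. H e = A e" "\<forall>e\<in>E2. H e = B e"
  shows "feas src dst (E1 \<union> E2) s t c H (v1 + v2)"
proof -
  have a: "feas src dst E1 s t c H v1" using feas_cong[OF assms(5)] assms(7) by simp
  have b: "feas src dst E2 s t c H v2" using feas_cong[OF assms(6)] assms(8) by simp
  show ?thesis using par_comb[OF assms(1-4)] a b unfolding feas_def by blast
qed

lemma par_split_feas:
  assumes "finite E1" "finite E2" "E1 \<inter> E2 = {}" "nodes src dst E1 \<inter> nodes src dst E2 = {s, t}"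
    "feas src dst (E1 \<union> E2) s t c F v"
  shows "\<exists>v1. feas src dst E1 s t c F v1 \<and> feas src dst E2 s t c F (v - v1)"
  using par_split2[OF assms(1-4)] assms(5) unfolding feas_def by blast

lemma ser_comb_feas:
  assumes "finite E1" "finite E2" "E1 \<inter> E2 = {}" "nodes src dst E1 \<inter> nodes src dst E2 = {m}"
    "s \<noteq> m" "m \<noteq> t" "s \<in> nodes src dst E1" "t \<in> nodes src dst E2"
    "feas src dst E1 s m c A v" "feas src dst E2 m t c B v" "\<forall>e\<in>E1. H e = A e" "\<forall>e\<in>E2. H e = B e"
  shows "feas src dst (E1 \<union> E2) s t c H v"
proof -
  have a: "feas src dst E1 s m c H v" using feas_cong[OF assms(9)] assms(11) by simp
  have b: "feas src dst E2 m t c H v" using feas_cong[OF assms(10)] assms(12) by simp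
  show ?thesis using ser_comb[OF assms(1-8)] a b unfolding feas_def by blast
qed

lemma ser_split_feas:
  assumes "finite E1" "finite E2" "E1 \<inter> E2 = {}" "nodes src dst E1 \<inter> nodes src dst E2 = {m}"
    "s \<noteq> m" "m \<noteq> t" "s \<in> nodes src dst E1" "t \<in> nodes src dst E2"
    "feas src dst (E1 \<union> E2) s t c F v"
  shows "feas src dst E1 s m c F v \<and> feas src dst E2 m t c F v"
  using ser_split[OF assms(1-8)] assms(9) unfolding feas_def by blast

lemma delay_if:
  assumes "finite E1" "finite E2" "E1 \<inter> E2 = {}" "\<forall>e\<in>E1. H e = A e" "\<forall>e\<in>E2. H e = B e"
  shows "agent_delay (E1 \<union> E2) d H = agent_delay E1 d A + agent_delay E2 d B"
  using delay_union[OF assms(1-3)] delay_cong[OF assms(4)] delay_cong[OF assms(5)] by simp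

definition ext_prop where
  "ext_prop src dst E s t c d \<longleftrightarrow> (\<forall>F v v' G. optf src dst E s t c d F v \<and> v \<le> v' \<and> feas src dst E s t c G v' \<longrightarrow>
     (\<exists>F'. optf src dst E s t c d F' v' \<and> (\<forall>e\<in>E. F e \<le> F' e)))"

lemma par_key:
  assumes fin: "finite E1" "finite E2" and dj: "E1 \<inter> E2 = {}"
    and nd: "nodes src dst E1 \<inter> nodes src dst E2 = {s, t}" and EU: "E = E1 \<union> E2"
    and IH2: "ext_prop src dst E2 s t c d"
    and F: "optf src dst E s t c d F v" "feas src dst E1 s t c F v1" "feas src dst E2 s t c F v2" "v = v1 + v2"
    and G: "optf src dst E s t c d G v'" "feas src dst E1 s t c G w1" "feas src dst E2 s t c G w2" "v' = w1 + w2"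
    and lt: "w1 < v1" and le: "v \<le> v'"
  shows "\<exists>F'. optf src dst E s t c d F' v' \<and> (\<forall>e\<in>E. F e \<le> F' e)"
proof -
  have finE: "finite E" using fin EU by simp
  define a where "a = v1 - w1"
  have apos: "0 < a" using lt a_def by simp
  have gap: "a \<le> w2 - v2" using le F(4) G(4) a_def by simp
  define \<mu> where "\<mu> = a / (w2 - v2)"
  have mu0: "0 < \<mu>" using apos gap by (simp add: \<mu>_def)
  have mu1: "\<mu> \<le> 1" using apos gap by (simp add: \<mu>_def)
  have mua: "\<mu> * (w2 - v2) = a" using apos gap by (simp add: \<mu>_def)
  define M1 where "M1 = (\<lambda>e. (1 - \<mu>) * F e + \<mu> * G e)"
  define M2 where "M2 = (\<lambda>e. \<mu> * F e + (1 - \<mu>) * G e)"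
  have fl: "is_st_flow src dst E2 s t F v2" "is_st_flow src dst E2 s t G w2"
    using F(3) G(3) by (simp_all add: feas_def)
  have nn: "\<forall>e\<in>E2. 0 \<le> F e \<and> 0 \<le> G e" using fl by (simp add: is_st_flow_def)
  have cap: "\<forall>e\<in>E2. F e \<le> c e \<and> G e \<le> c e" using F(3) G(3) by (simp add: feas_def)
  have M1f: "feas src dst E2 s t c M1 (v2 + a)"
  proof -
    have "is_st_flow src dst E2 s t M1 ((1 - \<mu>) * v2 + \<mu> * w2)"
      unfolding M1_def using nn mu0 mu1 by (intro flow_lin[OF fl]) simp
    moreover have "(1 - \<mu>) * v2 + \<mu> * w2 = v2 + a" using mua by (simp add: algebra_simps)
    moreover have "\<forall>e\<in>E2. M1 e \<le> c e" unfolding M1_def using cap mu0 mu1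
      by (intro ballI convex_bound_le) auto
    ultimately show ?thesis by (simp add: feas_def)
  qed
  have M2f: "feas src dst E2 s t c M2 (w2 - a)"
  proof -
    have "is_st_flow src dst E2 s t M2 (\<mu> * v2 + (1 - \<mu>) * w2)"
      unfolding M2_def using nn mu0 mu1 by (intro flow_lin[OF fl]) simp
    moreover have "\<mu> * v2 + (1 - \<mu>) * w2 = w2 - a" using mua by (simp add: algebra_simps)
    moreover have "\<forall>e\<in>E2. M2 e \<le> c e" unfolding M2_def using cap mu0 mu1
      by (intro ballI convex_bound_le) auto
    ultimately show ?thesis by (simp add: feas_def)
  qed
  have dM: "agent_delay E2 d M1 + agent_delay E2 d M2 = agent_delay E2 d F + agent_delay E2 d G"
    unfolding M1_def M2_def delay_lin by (simp add: algebra_simps)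
  define X where "X = (\<lambda>e. if e \<in> E1 then G e else M1 e)"
  have Xf: "feas src dst E s t c X (w1 + (v2 + a))" unfolding EU
    by (rule par_comb_feas[OF fin dj nd G(2) M1f]) (use dj in \<open>auto simp: X_def\<close>)
  have "w1 + (v2 + a) = v" using F(4) a_def by simp
  hence "agent_delay E d F \<le> agent_delay E d X" using F(1) Xf by (simp add: optf_def)
  also have "agent_delay E d X = agent_delay E1 d G + agent_delay E2 d M1"
    unfolding EU by (rule delay_if[OF fin dj]) (use dj in \<open>auto simp: X_def\<close>)
  finally have i1: "agent_delay E d F \<le> agent_delay E1 d G + agent_delay E2 d M1" .
  have F2opt: "optf src dst E2 s t c d F v2"
  proof (rule opt_part[OF F(1), of E2 E1])
    show "E = E2 \<union> E1" using EU by auto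
    show "E2 \<inter> E1 = {}" using dj by auto
    show "finite E" by (rule finE)
    show "feas src dst E2 s t c F v2" by (rule F(3))
    show "\<forall>K. feas src dst E2 s t c K v2 \<longrightarrow> feas src dst E s t c (\<lambda>e. if e \<in> E2 then K e else F e) v"
    proof (intro allI impI)
      fix K assume K: "feas src dst E2 s t c K v2"
      have "feas src dst (E1 \<union> E2) s t c (\<lambda>e. if e \<in> E2 then K e else F e) (v1 + v2)"
        by (rule par_comb_feas[OF fin dj nd F(2) K]) (use dj in auto)
      thus "feas src dst E s t c (\<lambda>e. if e \<in> E2 then K e else F e) v" using EU F(4) by simp
    qed
  qed
  have "v2 \<le> w2 - a" using gap by simp
  then obtain F2' where F2': "optf src dst E2 s t c d F2' (w2 - a)" "\<forall>e\<in>E2. F e \<le> F2' e"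
    using IH2 F2opt M2f unfolding ext_prop_def by blast
  have i2: "agent_delay E2 d F2' \<le> agent_delay E2 d M2" using F2'(1) M2f by (simp add: optf_def)
  define H where "H = (\<lambda>e. if e \<in> E1 then F e else F2' e)"
  have F2'f: "feas src dst E2 s t c F2' (w2 - a)" using F2'(1) by (simp add: optf_def)
  have Hf0: "feas src dst E s t c H (v1 + (w2 - a))" unfolding EU
    by (rule par_comb_feas[OF fin dj nd F(2) F2'f]) (use dj in \<open>auto simp: H_def\<close>)
  have "v1 + (w2 - a) = v'" using G(4) a_def by simp
  hence Hf: "feas src dst E s t c H v'" using Hf0 by simp
  have dH: "agent_delay E d H = agent_delay E1 d F + agent_delay E2 d F2'"
    unfolding EU by (rule delay_if[OF fin dj]) (use dj in \<open>auto simp: H_def\<close>)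
  have dF: "agent_delay E d F = agent_delay E1 d F + agent_delay E2 d F"
    unfolding EU by (rule delay_union[OF fin dj])
  have dG: "agent_delay E d G = agent_delay E1 d G + agent_delay E2 d G"
    unfolding EU by (rule delay_union[OF fin dj])
  have HG: "agent_delay E d H \<le> agent_delay E d G" using dH dF dG i1 i2 dM by linarith
  have "optf src dst E s t c d H v'"
    using Hf HG G(1) unfolding optf_def by fastforce
  moreover have "\<forall>e\<in>E. F e \<le> H e" using F2'(2) EU by (auto simp: H_def)
  ultimately show ?thesis by blast
qed


lemma sp_ext:
  assumes "series_parallel src dst E s t"
  shows "ext_prop src dst E s t c d"
  using assms
proof (induction rule: series_parallel.induct)
  case (single e)
  show ?case unfolding ext_prop_def
  proof (intro allI impI, elim conjE)
    fix F v v' G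
    assume F: "optf src dst {e} (src e) (dst e) c d F v" and le: "v \<le> v'"
      and G: "feas src dst {e} (src e) (dst e) c G v'"
    have Ge: "G e = v'" using G single by (simp add: feas_def single_flow)
    have Fe: "F e = v" using F single by (simp add: optf_def feas_def single_flow)
    have "agent_delay {e} d G \<le> agent_delay {e} d K" if "feas src dst {e} (src e) (dst e) c K v'" for K
    proof -
      have "K e = v'" using that single by (simp add: feas_def single_flow)
      thus ?thesis using Ge by (simp add: agent_delay_def)
    qed
    hence "optf src dst {e} (src e) (dst e) c d G v'" using G by (simp add: optf_def)
    moreover have "\<forall>x\<in>{e}. F x \<le> G x" using Ge Fe le by simp
    ultimately show "\<exists>F'. optf src dst {e} (src e) (dst e) c d F' v' \<and> (\<forall>x\<in>{e}. F x \<le> F' x)" by blast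
  qed
next
  case (series E1 s m E2 t)
  have b1: "finite E1 \<and> s \<noteq> m \<and> s \<in> nodes src dst E1 \<and> m \<in> nodes src dst E1" by (rule sp_basic[OF series(1)])
  have b2: "finite E2 \<and> m \<noteq> t \<and> m \<in> nodes src dst E2 \<and> t \<in> nodes src dst E2" by (rule sp_basic[OF series(2)])
  have fin: "finite E1" "finite E2" using b1 b2 by auto
  note P = fin series(3) series(4) conjunct1[OF conjunct2[OF b1]] conjunct1[OF conjunct2[OF b2]]
     conjunct1[OF conjunct2[OF conjunct2[OF b1]]] conjunct2[OF conjunct2[OF conjunct2[OF b2]]]
  show ?case unfolding ext_prop_def
  proof (intro allI impI, elim conjE)
    fix F v v' G
    assume F: "optf src dst (E1 \<union> E2) s t c d F v" and le: "v \<le> v'"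
      and G: "feas src dst (E1 \<union> E2) s t c G v'"
    have Fs: "feas src dst E1 s m c F v \<and> feas src dst E2 m t c F v"
      using F by (intro ser_split_feas[OF P]) (simp add: optf_def)
    have Gs: "feas src dst E1 s m c G v' \<and> feas src dst E2 m t c G v'"
      by (rule ser_split_feas[OF P G])
    have o1: "optf src dst E1 s m c d F v"
    proof (rule opt_part[OF F, of E1 E2])
      show "finite (E1 \<union> E2)" using fin by simp
      show "feas src dst E1 s m c F v" using Fs by simp
      show "\<forall>K. feas src dst E1 s m c K v \<longrightarrow> feas src dst (E1 \<union> E2) s t c (\<lambda>e. if e \<in> E1 then K e else F e) v"
      proof (intro allI impI)
        fix K assume K: "feas src dst E1 s m c K v"
        show "feas src dst (E1 \<union> E2) s t c (\<lambda>e. if e \<in> E1 then K e else F e) v"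
          by (rule ser_comb_feas[OF P K conjunct2[OF Fs]]) (use series(3) in auto)
      qed
    qed (use series(3) in auto)
    have o2: "optf src dst E2 m t c d F v"
    proof (rule opt_part[OF F, of E2 E1])
      show "finite (E1 \<union> E2)" using fin by simp
      show "feas src dst E2 m t c F v" using Fs by simp
      show "\<forall>K. feas src dst E2 m t c K v \<longrightarrow> feas src dst (E1 \<union> E2) s t c (\<lambda>e. if e \<in> E2 then K e else F e) v"
      proof (intro allI impI)
        fix K assume K: "feas src dst E2 m t c K v"
        show "feas src dst (E1 \<union> E2) s t c (\<lambda>e. if e \<in> E2 then K e else F e) v"
          by (rule ser_comb_feas[OF P conjunct1[OF Fs] K]) (use series(3) in auto)
      qed
    qed (use series(3) in auto)
    obtain F1 where F1: "optf src dst E1 s m c d F1 v'" "\<forall>e\<in>E1. F e \<le> F1 e"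
      using series.IH(1) o1 le Gs unfolding ext_prop_def by blast
    obtain F2 where F2: "optf src dst E2 m t c d F2 v'" "\<forall>e\<in>E2. F e \<le> F2 e"
      using series.IH(2) o2 le Gs unfolding ext_prop_def by blast
    define H where "H = (\<lambda>e. if e \<in> E1 then F1 e else F2 e)"
    have Hf: "feas src dst (E1 \<union> E2) s t c H v'"
      by (rule ser_comb_feas[OF P]) (use F1(1) F2(1) series(3) in \<open>auto simp: optf_def H_def\<close>)
    have dH: "agent_delay (E1 \<union> E2) d H = agent_delay E1 d F1 + agent_delay E2 d F2"
      by (rule delay_if[OF fin series(3)]) (use series(3) in \<open>auto simp: H_def\<close>)
    have "agent_delay (E1 \<union> E2) d H \<le> agent_delay (E1 \<union> E2) d K"
      if "feas src dst (E1 \<union> E2) s t c K v'" for K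
    proof -
      have Ks: "feas src dst E1 s m c K v' \<and> feas src dst E2 m t c K v'"
        by (rule ser_split_feas[OF P that])
      hence "agent_delay E1 d F1 \<le> agent_delay E1 d K" "agent_delay E2 d F2 \<le> agent_delay E2 d K"
        using F1(1) F2(1) by (simp_all add: optf_def)
      thus ?thesis using dH delay_union[OF fin series(3), of d K] by simp
    qed
    hence "optf src dst (E1 \<union> E2) s t c d H v'" using Hf by (simp add: optf_def)
    moreover have "\<forall>e\<in>E1 \<union> E2. F e \<le> H e" using F1(2) F2(2) by (auto simp: H_def)
    ultimately show "\<exists>F'. optf src dst (E1 \<union> E2) s t c d F' v' \<and> (\<forall>e\<in>E1 \<union> E2. F e \<le> F' e)" by blast
  qed
next
  case (parallel E1 s t E2)
  have fin: "finite E1" "finite E2" using sp_basic[OF parallel(1)] sp_basic[OF parallel(2)] by auto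
  note P = fin parallel(3) parallel(4)
  have P': "finite E2" "finite E1" "E2 \<inter> E1 = {}" "nodes src dst E2 \<inter> nodes src dst E1 = {s, t}"
    using P by auto
  have finE: "finite (E1 \<union> E2)" using fin by simp
  show ?case unfolding ext_prop_def
  proof (intro allI impI, elim conjE)
    fix F v v' G0
    assume F: "optf src dst (E1 \<union> E2) s t c d F v" and le: "v \<le> v'"
      and G0: "feas src dst (E1 \<union> E2) s t c G0 v'"
    obtain G where G: "optf src dst (E1 \<union> E2) s t c d G v'" using exists_opt[OF finE G0] by blast
    obtain v1 where Fs: "feas src dst E1 s t c F v1" "feas src dst E2 s t c F (v - v1)"
      using par_split_feas[OF P] F unfolding optf_def by blast
    obtain w1 where Gs: "feas src dst E1 s t c G w1" "feas src dst E2 s t c G (v' - w1)"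
      using par_split_feas[OF P] G unfolding optf_def by blast
    show "\<exists>F'. optf src dst (E1 \<union> E2) s t c d F' v' \<and> (\<forall>e\<in>E1 \<union> E2. F e \<le> F' e)"
    proof (cases "w1 < v1")
      case True
      show ?thesis
        by (rule par_key[OF P refl parallel.IH(2) F Fs _ G Gs _ True le]) simp_all
    next
      case f1: False
      show ?thesis
      proof (cases "v' - w1 < v - v1")
        case True
        have "\<exists>F'. optf src dst (E1 \<union> E2) s t c d F' v' \<and> (\<forall>e\<in>E1 \<union> E2. F e \<le> F' e)"
          by (rule par_key[OF P' _ parallel.IH(1) F Fs(2) Fs(1) _ G Gs(2) Gs(1) _ True le]) auto
        thus ?thesis .
      next
        case f2: False
        have o1: "optf src dst E1 s t c d F v1"
        proof (rule opt_part[OF F, of E1 E2])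
          show "finite (E1 \<union> E2)" by (rule finE)
          show "feas src dst E1 s t c F v1" by (rule Fs(1))
          show "\<forall>K. feas src dst E1 s t c K v1 \<longrightarrow> feas src dst (E1 \<union> E2) s t c (\<lambda>e. if e \<in> E1 then K e else F e) v"
          proof (intro allI impI)
            fix K assume K: "feas src dst E1 s t c K v1"
            have "feas src dst (E1 \<union> E2) s t c (\<lambda>e. if e \<in> E1 then K e else F e) (v1 + (v - v1))"
              by (rule par_comb_feas[OF P K Fs(2)]) (use parallel(3) in auto)
            thus "feas src dst (E1 \<union> E2) s t c (\<lambda>e. if e \<in> E1 then K e else F e) v" by simp
          qed
        qed (use parallel(3) in auto)
        have o2: "optf src dst E2 s t c d F (v - v1)"
        proof (rule opt_part[OF F, of E2 E1])
          show "finite (E1 \<union> E2)" by (rule finE)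
          show "feas src dst E2 s t c F (v - v1)" by (rule Fs(2))
          show "\<forall>K. feas src dst E2 s t c K (v - v1) \<longrightarrow> feas src dst (E1 \<union> E2) s t c (\<lambda>e. if e \<in> E2 then K e else F e) v"
          proof (intro allI impI)
            fix K assume K: "feas src dst E2 s t c K (v - v1)"
            have "feas src dst (E1 \<union> E2) s t c (\<lambda>e. if e \<in> E2 then K e else F e) (v1 + (v - v1))"
              by (rule par_comb_feas[OF P Fs(1) K]) (use parallel(3) in auto)
            thus "feas src dst (E1 \<union> E2) s t c (\<lambda>e. if e \<in> E2 then K e else F e) v" by simp
          qed
        qed (use parallel(3) in auto)
        have l1: "v1 \<le> w1" and l2: "v - v1 \<le> v' - w1" using f1 f2 by auto
        obtain F1 where F1: "optf src dst E1 s t c d F1 w1" "\<forall>e\<in>E1. F e \<le> F1 e"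
          using parallel.IH(1) o1 l1 Gs(1) unfolding ext_prop_def by blast
        obtain F2 where F2: "optf src dst E2 s t c d F2 (v' - w1)" "\<forall>e\<in>E2. F e \<le> F2 e"
          using parallel.IH(2) o2 l2 Gs(2) unfolding ext_prop_def by blast
        define H where "H = (\<lambda>e. if e \<in> E1 then F1 e else F2 e)"
        have F1f: "feas src dst E1 s t c F1 w1" and F2f: "feas src dst E2 s t c F2 (v' - w1)"
          using F1(1) F2(1) by (simp_all add: optf_def)
        have "feas src dst (E1 \<union> E2) s t c H (w1 + (v' - w1))"
          by (rule par_comb_feas[OF P F1f F2f]) (use parallel(3) in \<open>auto simp: H_def\<close>)
        hence Hf: "feas src dst (E1 \<union> E2) s t c H v'" by simp
        have dH: "agent_delay (E1 \<union> E2) d H = agent_delay E1 d F1 + agent_delay E2 d F2"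
          by (rule delay_if[OF fin parallel(3)]) (use parallel(3) in \<open>auto simp: H_def\<close>)
        have "agent_delay E1 d F1 \<le> agent_delay E1 d G" "agent_delay E2 d F2 \<le> agent_delay E2 d G"
          using F1(1) F2(1) Gs by (simp_all add: optf_def)
        hence HG: "agent_delay (E1 \<union> E2) d H \<le> agent_delay (E1 \<union> E2) d G"
          using dH delay_union[OF fin parallel(3), of d G] by simp
        have "optf src dst (E1 \<union> E2) s t c d H v'" using Hf HG G unfolding optf_def by fastforce
        moreover have "\<forall>e\<in>E1 \<union> E2. F e \<le> H e" using F1(2) F2(2) by (auto simp: H_def)
        ultimately show ?thesis by blast
      qed
    qed
  qed
qed


lemma zero_flow: "is_st_flow src dst E s t (\<lambda>e. 0) 0"
  unfolding is_st_flow_def inflow_def outflow_def by simp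

lemma flow_sum:
  assumes "finite S" "\<forall>j\<in>S. is_st_flow src dst E s t (f j) (r j)"
  shows "is_st_flow src dst E s t (\<lambda>e. \<Sum>j\<in>S. f j e) (\<Sum>j\<in>S. r j)"
  using assms
proof (induction S rule: finite_induct)
  case empty
  then show ?case using zero_flow by simp
next
  case (insert x S)
  have a: "is_st_flow src dst E s t (f x) (r x)" using insert.prems by simp
  have b: "is_st_flow src dst E s t (\<lambda>e. \<Sum>j\<in>S. f j e) (\<Sum>j\<in>S. r j)" using insert by simp
  have nn: "\<forall>e\<in>E. 0 \<le> 1 * f x e + 1 * (\<Sum>j\<in>S. f j e)"
    using a b by (simp add: is_st_flow_def)
  have "is_st_flow src dst E s t (\<lambda>e. 1 * f x e + 1 * (\<Sum>j\<in>S. f j e)) (1 * r x + 1 * (\<Sum>j\<in>S. r j))"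
    by (rule flow_lin[OF a b nn])
  thus ?case using insert.hyps by simp
qed

lemma delay_sum:
  assumes "finite S"
  shows "agent_delay E d (\<lambda>e. \<Sum>j\<in>S. f j e) = (\<Sum>j\<in>S. agent_delay E d (f j))"
  unfolding agent_delay_def by (simp add: sum_distrib_left sum.swap[of _ E])

lemma delay_nonneg:
  assumes "\<forall>e\<in>E. 0 \<le> d e" "\<forall>e\<in>E. 0 \<le> F e"
  shows "0 \<le> agent_delay E d F"
  unfolding agent_delay_def using assms by (intro sum_nonneg) simp

theorem lemmaD3:
  fixes src dst :: "'e \<Rightarrow> 'v" and E :: "'e set" and s t :: 'v
    and c d :: "'e \<Rightarrow> real" and A :: "'a set" and r :: "'a \<Rightarrow> real"
  assumes "series_parallel src dst E s t"
    and "\<forall>e\<in>E. 0 < c e"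
    and "\<forall>e\<in>E. 0 \<le> d e"
    and "finite A"
    and "\<forall>i\<in>A. 0 \<le> r i"
    and "max_flow_value src dst E s t c \<ge> (\<Sum>i\<in>A. r i)"
  shows "extensible src dst E s t c d r A"
  unfolding extensible_def
proof (intro allI impI, elim conjE)
  fix S f i
  assume SA: "S \<subseteq> A" and jo: "jointly_optimal src dst E s t c d r S f" and iA: "i \<in> A - S"
  have finS: "finite S" using SA assms(4) finite_subset by blast
  have finE: "finite E" using sp_basic[OF assms(1)] by simp
  have c0: "\<forall>e\<in>E. 0 \<le> c e" using assms(2) by (simp add: less_imp_le)
  have rS: "\<forall>j\<in>S. 0 \<le> r j" using SA assms(5) by blast
  define R where "R = (\<Sum>j\<in>S. r j)"
  have R0: "0 \<le> R" unfolding R_def using rS by (simp add: sum_nonneg)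
  define Fa where "Fa = (\<lambda>e. \<Sum>j\<in>S. f j e)"
  have ff: "\<forall>j\<in>S. is_st_flow src dst E s t (f j) (r j)" and sr: "supply_respecting E c S f"
    using jo by (simp_all add: jointly_optimal_def feasible_for_def)
  have Faf: "is_st_flow src dst E s t Fa R" unfolding Fa_def R_def by (rule flow_sum[OF finS ff])
  have Fafeas: "feas src dst E s t c Fa R" using Faf sr by (simp add: feas_def supply_respecting_def Fa_def)
  have dFa: "agent_delay E d Fa = (\<Sum>j\<in>S. agent_delay E d (f j))" unfolding Fa_def by (rule delay_sum[OF finS])
  have Faopt: "optf src dst E s t c d Fa R"
  proof -
    have "agent_delay E d Fa \<le> agent_delay E d K" if K: "feas src dst E s t c K R" for K
    proof -
      define g where "g = (\<lambda>j e. (r j / R) * K e + 0 * K e)"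
      have Kf: "is_st_flow src dst E s t K R" using K by (simp add: feas_def)
      have gf: "is_st_flow src dst E s t (g j) (r j)" if "j \<in> S" for j
      proof -
        have nn: "\<forall>e\<in>E. 0 \<le> r j / R * K e + 0 * K e" using Kf rS that R0 by (simp add: is_st_flow_def)
        have "is_st_flow src dst E s t (g j) (r j / R * R + 0 * R)"
          unfolding g_def by (rule flow_lin[OF Kf Kf nn])
        moreover have "r j / R * R = r j"
        proof (cases "R = 0")
          case True
          hence "r j = 0" using rS that finS unfolding R_def by (simp add: sum_nonneg_eq_0_iff)
          thus ?thesis by simp
        qed simp
        ultimately show ?thesis by simp
      qed
      have gsum: "(\<Sum>j\<in>S. g j e) = (R / R) * K e" for e
      proof -
        have "(\<Sum>j\<in>S. g j e) = (\<Sum>j\<in>S. r j / R) * K e" unfolding g_def by (simp add: sum_distrib_right)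
        also have "(\<Sum>j\<in>S. r j / R) = R / R" unfolding R_def by (rule sum_divide_distrib[symmetric])
        finally show ?thesis .
      qed
      have RR: "R / R \<le> 1" "0 \<le> R / R" using R0 by (cases "R = 0"; simp)+
      have Knn: "\<forall>e\<in>E. 0 \<le> K e" using Kf by (simp add: is_st_flow_def)
      have "\<forall>e\<in>E. (\<Sum>j\<in>S. g j e) \<le> c e"
      proof
        fix e assume e: "e \<in> E"
        have "(R / R) * K e \<le> K e" using RR Knn e by (intro mult_left_le_one_le) auto
        also have "K e \<le> c e" using K e by (simp add: feas_def)
        finally show "(\<Sum>j\<in>S. g j e) \<le> c e" using gsum by simp
      qed
      hence "feasible_for src dst E s t c r S g" using gf by (simp add: feasible_for_def supply_respecting_def)
      hence "(\<Sum>j\<in>S. agent_delay E d (f j)) \<le> (\<Sum>j\<in>S. agent_delay E d (g j))"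
        using jo by (simp add: jointly_optimal_def)
      also have "\<dots> = agent_delay E d (\<lambda>e. \<Sum>j\<in>S. g j e)" by (rule delay_sum[OF finS, symmetric])
      also have "\<dots> = (R / R) * agent_delay E d K"
        using delay_lin[of E d "R / R" K 0 K] by (simp add: gsum)
      also have "\<dots> \<le> agent_delay E d K"
        using RR delay_nonneg[OF assms(3) Knn] by (intro mult_left_le_one_le) auto
      finally show ?thesis using dFa by simp
    qed
    thus ?thesis using Fafeas by (simp add: optf_def)
  qed
  define v' where "v' = R + r i"
  have ri: "0 \<le> r i" using iA assms(5) by simp
  have Rv: "R \<le> v'" using ri by (simp add: v'_def)
  obtain \<Phi> V where Phi: "feas src dst E s t c \<Phi> V" and Vmax: "\<forall>G w. feas src dst E s t c G w \<longrightarrow> w \<le> V"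
    using exists_maxflow[OF finE c0, of src dst s t] by blast
  have "max_flow_value src dst E s t c \<le> V"
    unfolding max_flow_value_def
  proof (rule cSup_least)
    show "{v. \<exists>\<phi>. is_st_flow src dst E s t \<phi> v \<and> (\<forall>e\<in>E. \<phi> e \<le> c e)} \<noteq> {}"
      using Phi by (auto simp: feas_def)
    show "\<And>x. x \<in> {v. \<exists>\<phi>. is_st_flow src dst E s t \<phi> v \<and> (\<forall>e\<in>E. \<phi> e \<le> c e)} \<Longrightarrow> x \<le> V"
      using Vmax by (auto simp: feas_def)
  qed
  moreover have "v' \<le> (\<Sum>j\<in>A. r j)"
  proof -
    have "v' = (\<Sum>j\<in>insert i S. r j)" using iA finS by (simp add: v'_def R_def)
    also have "\<dots> \<le> (\<Sum>j\<in>A. r j)" using iA SA assms(4,5) by (intro sum_mono2) auto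
    finally show ?thesis .
  qed
  ultimately have v'V: "v' \<le> V" using assms(6) by linarith
  have v'0: "0 \<le> v'" using R0 ri by (simp add: v'_def)
  have Gt: "feas src dst E s t c (\<lambda>e. (v' / V) * \<Phi> e + 0 * \<Phi> e) v'"
  proof -
    have Pf: "is_st_flow src dst E s t \<Phi> V" using Phi by (simp add: feas_def)
    have q: "0 \<le> v' / V" "v' / V \<le> 1" using v'V v'0 by (cases "V = 0"; simp)+
    have Pnn: "\<forall>e\<in>E. 0 \<le> \<Phi> e" using Pf by (simp add: is_st_flow_def)
    have "is_st_flow src dst E s t (\<lambda>e. (v' / V) * \<Phi> e + 0 * \<Phi> e) (v' / V * V + 0 * V)"
      using Pnn q by (intro flow_lin[OF Pf Pf]) (simp del: times_divide_eq_left times_divide_eq_right)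
    moreover have "v' / V * V = v'" using v'V v'0 by (cases "V = 0") simp_all
    moreover have "\<forall>e\<in>E. (v' / V) * \<Phi> e + 0 * \<Phi> e \<le> c e"
    proof
      fix e assume e: "e \<in> E"
      have "(v' / V) * \<Phi> e \<le> \<Phi> e" using q Pnn e by (intro mult_left_le_one_le) auto
      also have "\<Phi> e \<le> c e" using Phi e by (simp add: feas_def)
      finally show "(v' / V) * \<Phi> e + 0 * \<Phi> e \<le> c e" by simp
    qed
    ultimately show ?thesis by (simp add: feas_def)
  qed
  obtain F' where F': "optf src dst E s t c d F' v'" "\<forall>e\<in>E. Fa e \<le> F' e"
    using sp_ext[OF assms(1), of c d] Faopt Rv Gt unfolding ext_prop_def by blast
  define g where "g = (\<lambda>j. if j = i then (\<lambda>e. F' e - Fa e) else f j)"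
  have iS: "i \<notin> S" using iA by simp
  have gS: "\<forall>j\<in>S. g j = f j" using iS by (auto simp: g_def)
  have F'f: "is_st_flow src dst E s t F' v'" using F' by (simp add: optf_def feas_def)
  have gi: "is_st_flow src dst E s t (g i) (r i)"
  proof -
    have nn: "\<forall>e\<in>E. 0 \<le> (-1) * Fa e + 1 * F' e" using F'(2) by simp
    have "is_st_flow src dst E s t (\<lambda>e. (-1) * Fa e + 1 * F' e) ((-1) * R + 1 * v')"
      by (rule flow_lin[OF Faf F'f nn])
    moreover have "(\<lambda>e. (-1) * Fa e + 1 * F' e) = g i" by (simp add: g_def)
    ultimately show ?thesis by (simp add: v'_def)
  qed
  have gsum: "(\<Sum>j\<in>insert i S. g j e) = F' e" for e
  proof -
    have "(\<Sum>j\<in>insert i S. g j e) = g i e + (\<Sum>j\<in>S. g j e)" using finS iS by simp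
    also have "(\<Sum>j\<in>S. g j e) = Fa e" unfolding Fa_def using gS by simp
    finally show ?thesis by (simp add: g_def)
  qed
  have gfeas: "feasible_for src dst E s t c r (insert i S) g"
    unfolding feasible_for_def supply_respecting_def
  proof (intro conjI ballI)
    fix j assume "j \<in> insert i S"
    thus "is_st_flow src dst E s t (g j) (r j)" using gi gS ff by auto
  next
    fix e assume "e \<in> E"
    thus "(\<Sum>j\<in>insert i S. g j e) \<le> c e" using F' gsum by (simp add: optf_def feas_def)
  qed
  have dg: "(\<Sum>j\<in>insert i S. agent_delay E d (g j)) = agent_delay E d F'"
    using delay_sum[of "insert i S" E d g] finS gsum by simp
  have "jointly_optimal src dst E s t c d r (insert i S) g"
    unfolding jointly_optimal_def
  proof (intro conjI allI impI)
    show "feasible_for src dst E s t c r (insert i S) g" by (rule gfeas)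
  next
    fix g' assume g': "feasible_for src dst E s t c r (insert i S) g'"
    have "is_st_flow src dst E s t (\<lambda>e. \<Sum>j\<in>insert i S. g' j e) (\<Sum>j\<in>insert i S. r j)"
      using g' finS by (intro flow_sum) (simp_all add: feasible_for_def)
    moreover have "(\<Sum>j\<in>insert i S. r j) = v'" using finS iS by (simp add: v'_def R_def)
    ultimately have "feas src dst E s t c (\<lambda>e. \<Sum>j\<in>insert i S. g' j e) v'"
      using g' by (simp add: feas_def feasible_for_def supply_respecting_def)
    hence "agent_delay E d F' \<le> agent_delay E d (\<lambda>e. \<Sum>j\<in>insert i S. g' j e)"
      using F' by (simp add: optf_def)
    also have "\<dots> = (\<Sum>j\<in>insert i S. agent_delay E d (g' j))" using finS by (simp add: delay_sum)
    finally show "(\<Sum>j\<in>insert i S. agent_delay E d (g j)) \<le> (\<Sum>j\<in>insert i S. agent_delay E d (g' j))"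
      using dg by simp
  qed
  moreover have "\<forall>j\<in>S. agent_delay E d (g j) = agent_delay E d (f j)" using gS by simp
  ultimately show "\<exists>g. jointly_optimal src dst E s t c d r (insert i S) g \<and>
             (\<forall>j\<in>S. agent_delay E d (g j) = agent_delay E d (f j))" by blast
qed

end
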